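(* Let $A\in\mathbb{R}^{n\times n}$ be symmetric with $r:=\mathrm{rank}(A)$, and let $\epsilon\ge 0$. Let $S\subseteq\{1,\dots,n\}$ with $|S|=r$ be such that the principal submatrix $A[S]$ is nonsingular, and let $T$ be obtained from $S$ by replacing one element of $S$ by an element of $\{1,\dots,n\}\setminus S$. If $|\det(A[T])|\le(1+\epsilon)|\det(A[S])|$, then $|\det(A[S,T])|\le\sqrt{1+\epsilon}\,|\det(A[S])|$.
   Context: $A[S,T]$ denotes the submatrix of $A$ with row indices $S$ and column indices $T$, and $A[S]:=A[S,S]$ is the principal submatrix with row/column indices $S$ (index sets taken in a fixed order; only absolute values of determinants are involved). *)

theory Defs
  imports "Jordan_Normal_Form.DL_Rank" "Jordan_Normal_Form.DL_Submatrix"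
begin

end

theory Submission
  imports Defs
begin

lemma submatrix_mult:
  assumes C: "C \<in> carrier_mat n r" and X: "X \<in> carrier_mat r m"
  shows "submatrix (C * X) U V = submatrix C U UNIV * submatrix X UNIV V"
proof (rule eq_matI)
  show "dim_row (submatrix (C * X) U V) = dim_row (submatrix C U UNIV * submatrix X UNIV V)"
    using C X by (simp add: dim_submatrix)
  show "dim_col (submatrix (C * X) U V) = dim_col (submatrix C U UNIV * submatrix X UNIV V)"
    using C X by (simp add: dim_submatrix)
  fix i j assume i: "i < dim_row (submatrix C U UNIV * submatrix X UNIV V)"
    and j: "j < dim_col (submatrix C U UNIV * submatrix X UNIV V)"
  have i1: "i < card {a. a < n \<and> a \<in> U}" and j1: "j < card {a. a < m \<and> a \<in> V}"
    using i j C X by (auto simp: dim_submatrix)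
  have pi: "pick U i < n" using pick_le[OF i1] .
  have pj: "pick V j < m" using pick_le[OF j1] .
  have cr: "card {a. a < r \<and> a \<in> (UNIV::nat set)} = r" by simp
  have "submatrix (C * X) U V $$ (i, j) = (C * X) $$ (pick U i, pick V j)"
    using submatrix_index[of i "C * X" U j V] i1 j1 C X by simp
  also have "\<dots> = (\<Sum>l<r. C $$ (pick U i, l) * X $$ (l, pick V j))"
    using pi pj C X by (simp add: scalar_prod_def lessThan_atLeast0)
  also have "\<dots> = (submatrix C U UNIV * submatrix X UNIV V) $$ (i, j)"
    using i1 j1 C X
    by (simp add: scalar_prod_def dim_submatrix submatrix_index pick_UNIV lessThan_atLeast0)
  finally show "submatrix (C * X) U V $$ (i, j) = (submatrix C U UNIV * submatrix X UNIV V) $$ (i, j)" .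
qed

lemma transpose_submatrix:
  "transpose_mat (submatrix A I J) = submatrix (transpose_mat A) J I"
proof (rule eq_matI)
  fix i j assume "i < dim_row (submatrix (transpose_mat A) J I)" "j < dim_col (submatrix (transpose_mat A) J I)"
  then show "transpose_mat (submatrix A I J) $$ (i, j) = submatrix (transpose_mat A) J I $$ (i, j)"
    using pick_le[of i "dim_col A" J] pick_le[of j "dim_row A" I]
    by (simp add: dim_submatrix submatrix_index)
qed (auto simp: dim_submatrix)

lemma card_sub: "I \<subseteq> {0..<n} \<Longrightarrow> {a. a < n \<and> a \<in> I} = I" by auto

lemma (in vec_space) cols_in_span:
  assumes A: "A \<in> carrier_mat n nc" and C: "C \<in> carrier_mat n r"
    and sub: "set (cols C) \<subseteq> set (cols A)" and dist: "distinct (cols C)"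
    and li: "lin_indpt (set (cols C))" and rk: "rank A = r" and k: "k < nc"
  shows "\<exists>x \<in> carrier_vec r. col A k = C *\<^sub>v x"
proof -
  let ?U = "set (cols C)"
  have cU: "card ?U = r" using distinct_card[OF dist] C by simp
  have Uc: "?U \<subseteq> carrier_vec n" using C cols_dim by blast
  have ac: "col A k \<in> carrier_vec n" using A k by auto
  have aA: "col A k \<in> set (cols A)" using A k by (metis carrier_matD(2) cols_length cols_nth nth_mem)
  have insp: "col A k \<in> span ?U"
  proof (cases "col A k \<in> ?U")
    case True
    then show ?thesis using span_mem[OF Uc] by blast
  next
    case False
    show ?thesis
    proof (rule ccontr)
      assume "col A k \<notin> span ?U"
      then have "lin_indpt (?U \<union> {col A k})"
        using lin_dep_iff_in_span[OF Uc li ac False] by blast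
      then have "rank A \<ge> card (?U \<union> {col A k})"
        using rank_ge_card_indpt[OF A, of "?U \<union> {col A k}"] sub aA by simp
      moreover have "card (?U \<union> {col A k}) = r + 1" using cU False by simp
      ultimately show False using rk by simp
    qed
  qed
  obtain c where c: "lincomb c ?U = col A k"
    using finite_in_span[OF _ Uc insp] by auto
  show ?thesis
    using mat_mult_eq_lincomb[OF C dist, of c] c by (intro bexI[of _ "vec r (\<lambda>i. c (col C i))"]) auto
qed

theorem lemma2p4:
  fixes A :: "real mat" and n r :: nat and \<epsilon> :: real
    and S T :: "nat set" and i j :: nat
  assumes "A \<in> carrier_mat n n"
    and "transpose_mat A = A"
    and "r = vec_space.rank n A"
    and "\<epsilon> \<ge> 0"
    and "S \<subseteq> {0..<n}" and "card S = r"
    and "det (submatrix A S S) \<noteq> 0"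
    and "i \<in> S" and "j \<in> {0..<n} - S"
    and "T = insert j (S - {i})"
    and "\<bar>det (submatrix A T T)\<bar> \<le> (1 + \<epsilon>) * \<bar>det (submatrix A S S)\<bar>"
  shows "\<bar>det (submatrix A S T)\<bar> \<le> sqrt (1 + \<epsilon>) * \<bar>det (submatrix A S S)\<bar>"
proof -
  note A = assms(1)
  define C where "C = submatrix A UNIV S"
  define AS where "AS = submatrix A S S"
  have Sn: "{a. a < n \<and> a \<in> S} = S" using assms(5) by auto
  have dA: "dim_row A = n" "dim_col A = n" using A by auto
  have Cc: "C \<in> carrier_mat n r"
    unfolding C_def by (rule carrier_matI) (simp_all only: dim_submatrix dA Sn assms(6), simp)
  have ASc: "AS \<in> carrier_mat r r"
    unfolding AS_def by (rule carrier_matI) (simp_all only: dim_submatrix dA Sn assms(6))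
  have ASC: "AS = submatrix C S UNIV" unfolding AS_def C_def by (rule submatrix_split)
  have pS: "pick S m < n" if "m < r" for m using pick_le[of m n S] that Sn assms(6) by simp
  have ASidx: "AS $$ (a, b) = C $$ (pick S a, b)" if "a < r" "b < r" for a b
    using that Cc Sn assms(6) unfolding ASC by (simp add: submatrix_index pick_UNIV)
  have colC: "col C m = col A (pick S m)" if "m < r" for m
  proof (rule eq_vecI)
    show "dim_vec (col C m) = dim_vec (col A (pick S m))" using Cc A by simp
    fix a assume "a < dim_vec (col A (pick S m))"
    then have a: "a < n" using A by simp
    then show "col C m $ a = col A (pick S m) $ a"
      using that Cc A pS[OF that] Sn assms(6) unfolding C_def
      by (simp add: submatrix_index pick_UNIV)
  qed
  interpret vec_space "TYPE(real)" n .
  have sub: "set (cols C) \<subseteq> set (cols A)"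
  proof
    fix v assume "v \<in> set (cols C)"
    then obtain m where m: "m < r" "v = col C m" using Cc by (auto simp: in_set_conv_nth)
    then show "v \<in> set (cols A)" using colC[OF m(1)] pS[OF m(1)] A
      by (metis carrier_matD(2) cols_length cols_nth nth_mem)
  qed
  have dist: "distinct (cols C)"
  proof (rule ccontr)
    assume "\<not> distinct (cols C)"
    then obtain a b where ab: "a \<noteq> b" "a < r" "b < r" "col C a = col C b"
      using Cc by (auto simp: distinct_conv_nth)
    have "col AS a = col AS b"
    proof (rule eq_vecI)
      fix l assume "l < dim_vec (col AS b)"
      then have l: "l < r" using ASc by simp
      have "C $$ (pick S l, a) = C $$ (pick S l, b)"
      proof -
        have "C $$ (pick S l, a) = col C a $ pick S l" using Cc pS[OF l] ab(2,3) by simp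
        also have "\<dots> = col C b $ pick S l" using ab(4) by simp
        also have "\<dots> = C $$ (pick S l, b)" using Cc pS[OF l] ab(2,3) by simp
        finally show ?thesis .
      qed
      then show "col AS a $ l = col AS b $ l" using l ab ASc ASidx by simp
    qed (use ASc in simp)
    then have "det AS = 0" using det_identical_cols[OF ASc ab(1-3)] by simp
    then show False using assms(7) AS_def by simp
  qed
  have li: "lin_indpt (set (cols C))"
  proof
    assume "lin_dep (set (cols C))"
    then obtain v where v: "v \<in> carrier_vec r" "v \<noteq> 0\<^sub>v r" "C *\<^sub>v v = 0\<^sub>v n"
      using lin_depE[OF Cc _ dist] by blast
    have "AS *\<^sub>v v = 0\<^sub>v r"
    proof (rule eq_vecI)
      fix l assume "l < dim_vec (0\<^sub>v r :: real vec)"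
      then have l: "l < r" by simp
      have "(AS *\<^sub>v v) $ l = (\<Sum>b<r. AS $$ (l, b) * v $ b)"
        using l ASc v by (simp add: scalar_prod_def lessThan_atLeast0 row_def)
      also have "\<dots> = (\<Sum>b<r. C $$ (pick S l, b) * v $ b)" using ASidx l by simp
      also have "\<dots> = (C *\<^sub>v v) $ pick S l"
        using pS[OF l] Cc v(1) by (simp add: scalar_prod_def lessThan_atLeast0 row_def)
      also have "\<dots> = 0" using v(3) pS[OF l] by simp
      finally show "(AS *\<^sub>v v) $ l = 0\<^sub>v r $ l" using l by simp
    qed (use ASc in simp)
    then have "det AS = 0" using det_0_iff_vec_prod_zero_field[OF ASc] v by blast
    then show False using assms(7) AS_def by simp
  qed
  have "\<forall>k. \<exists>x. k < n \<longrightarrow> x \<in> carrier_vec r \<and> col A k = C *\<^sub>v x"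
    using cols_in_span[OF A Cc sub dist li assms(3)[symmetric]] by blast
  then obtain x where x: "\<And>k. k < n \<Longrightarrow> x k \<in> carrier_vec r \<and> col A k = C *\<^sub>v x k"
    by metis
  define X where "X = mat r n (\<lambda>(a,k). x k $ a)"
  have Xc: "X \<in> carrier_mat r n" by (simp add: X_def)
  have colX: "col X k = x k" if "k < n" for k
    using x[OF that] that by (auto simp: X_def)
  have ACX: "A = C * X"
  proof (rule eq_matI)
    fix a k assume "a < dim_row (C * X)" "k < dim_col (C * X)"
    then have a: "a < n" and k: "k < n" using Cc Xc by auto
    have "A $$ (a, k) = col A k $ a" using A a k by simp
    also have "\<dots> = (C *\<^sub>v x k) $ a" using x[OF k] by simp
    also have "\<dots> = (C * X) $$ (a, k)" using colX[OF k] a k Cc Xc by simp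
    finally show "A $$ (a, k) = (C * X) $$ (a, k)" .
  qed (use A Cc Xc in auto)
  have key: "submatrix A U V = submatrix A U S * submatrix X UNIV V" for U V
  proof -
    have "submatrix A U V = submatrix C U UNIV * submatrix X UNIV V"
      using submatrix_mult[OF Cc Xc] ACX by metis
    moreover have "submatrix C U UNIV = submatrix A U S"
      unfolding C_def by (rule submatrix_split[symmetric])
    ultimately show ?thesis by simp
  qed
  have Tn: "T \<subseteq> {0..<n}" using assms(5,8,9,10) by auto
  have cT: "card T = r" using assms(6,8,9,10) finite_subset[OF assms(5)]
    by (simp add: card.insert_remove) (metis card_gt_0_iff empty_iff Suc_pred)
  have Tn': "{a. a < n \<and> a \<in> T} = T" using Tn by auto
  have XTc: "submatrix X UNIV T \<in> carrier_mat r r"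
    by (rule carrier_matI) (use Xc Tn' cT in \<open>simp_all add: dim_submatrix\<close>)
  have ATSc: "submatrix A T S \<in> carrier_mat r r"
    by (rule carrier_matI) (simp_all only: dim_submatrix dA Sn Tn' cT assms(6))
  have ASTc: "submatrix A S T \<in> carrier_mat r r"
    by (rule carrier_matI) (simp_all only: dim_submatrix dA Sn Tn' cT assms(6))
  have d1: "det (submatrix A S T) = det AS * det (submatrix X UNIV T)"
    using key[of S T] det_mult[OF ASc XTc] AS_def by simp
  have d2: "det (submatrix A T T) = det (submatrix A T S) * det (submatrix X UNIV T)"
    using key[of T T] det_mult[OF ATSc XTc] by simp
  have "submatrix A T S = transpose_mat (submatrix A S T)"
    using transpose_submatrix[of A S T] assms(2) by simp
  then have d3: "det (submatrix A T S) = det (submatrix A S T)"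
    using det_transpose[OF ASTc] by simp
  define p where "p = det (submatrix A S T)"
  define s where "s = det AS"
  define t where "t = det (submatrix A T T)"
  have eq: "p^2 = s * t" using d1 d2 d3 unfolding p_def s_def t_def by (simp add: power2_eq_square)
  have ht: "\<bar>t\<bar> \<le> (1 + \<epsilon>) * \<bar>s\<bar>" using assms(11) unfolding t_def s_def AS_def .
  have "p^2 \<le> (1 + \<epsilon>) * s^2"
  proof -
    have "p^2 = \<bar>s\<bar> * \<bar>t\<bar>" using eq by (metis abs_mult abs_power2)
    also have "\<dots> \<le> \<bar>s\<bar> * ((1 + \<epsilon>) * \<bar>s\<bar>)" using ht by (simp add: mult_left_mono)
    finally show ?thesis by (simp add: power2_eq_square algebra_simps)
  qed
  then have "sqrt (p^2) \<le> sqrt ((1 + \<epsilon>) * s^2)" by (rule real_sqrt_le_mono)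
  then have "\<bar>p\<bar> \<le> sqrt (1 + \<epsilon>) * \<bar>s\<bar>" by (simp add: real_sqrt_mult)
  then show ?thesis unfolding p_def s_def AS_def .
qed

end
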